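(* Let $p\geq 3$ be prime and $k\geq 1$ an integer. Then $c_{\mathrm{poly}}(p^k)=k+1$ and $c_{\mathrm{poly}}(2p^k)=2(k+1)$.
   Context: $S(\mathbb{Z}_n)$ is the set of bijections $\mathbb{Z}_n\to\mathbb{Z}_n$, and $S_{\mathrm{poly}}(\mathbb{Z}_n)$ is the set of $\pi\in S(\mathbb{Z}_n)$ for which there is a polynomial $f\in\mathbb{Z}_n[x]$ with $\pi(x)=f(x)$ for all $x\in\mathbb{Z}_n$. $\mathrm{cyc}(\pi)$ is the number of cycles (including fixed points) of $\pi$. Define $c_{\mathrm{poly}}(n)=\min_{\pi\in S_{\mathrm{poly}}(\mathbb{Z}_n)}\max_{k\in\mathbb{Z}_n}\mathrm{cyc}(x\mapsto\pi(x+k))$. *)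

theory Defs
  imports "HOL-Computational_Algebra.Polynomial"
begin

text \<open>Z_n is modelled by the carrier {0..<n} of natural numbers, arithmetic mod n.\<close>

definition perm_Zn :: "nat \<Rightarrow> (nat \<Rightarrow> nat) \<Rightarrow> bool" where
  "perm_Zn n \<pi> \<longleftrightarrow> bij_betw \<pi> {0..<n} {0..<n}"

text \<open>pi is induced by a polynomial over Z_n (coefficients lifted to integers).\<close>
definition poly_perm_Zn :: "nat \<Rightarrow> (nat \<Rightarrow> nat) \<Rightarrow> bool" where
  "poly_perm_Zn n \<pi> \<longleftrightarrow> perm_Zn n \<pi> \<and>
     (\<exists>f :: int poly. \<forall>x<n. int (\<pi> x) = poly f (int x) mod int n)"

definition cyc :: "nat \<Rightarrow> (nat \<Rightarrow> nat) \<Rightarrow> nat" where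
  "cyc n \<sigma> = card ((\<lambda>x. {(\<sigma> ^^ m) x | m. True}) ` {0..<n})"

definition shift_perm :: "nat \<Rightarrow> (nat \<Rightarrow> nat) \<Rightarrow> nat \<Rightarrow> nat \<Rightarrow> nat" where
  "shift_perm n \<pi> k = (\<lambda>x. \<pi> ((x + k) mod n))"

definition c_poly :: "nat \<Rightarrow> nat" where
  "c_poly n = (LEAST c. \<exists>\<pi>. poly_perm_Zn n \<pi> \<and>
       c = Max ((\<lambda>k. cyc n (shift_perm n \<pi> k)) ` {0..<n}))"

end

theory Submission
  imports Defs "HOL-Number_Theory.Number_Theory"
begin

definition orb :: "(nat \<Rightarrow> nat) \<Rightarrow> nat \<Rightarrow> nat set" where
  "orb \<sigma> x = {(\<sigma> ^^ m) x | m. True}"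

lemma cyc_orb: "cyc n \<sigma> = card (orb \<sigma> ` {0..<n})"
  unfolding cyc_def orb_def by simp

lemma funpow_in:
  fixes \<sigma> :: "nat \<Rightarrow> nat"
  assumes "bij_betw \<sigma> {0..<n} {0..<n}" "x < n"
  shows "(\<sigma> ^^ m) x < n"
  using bij_betw_apply[OF bij_betw_funpow[OF assms(1)], of x m] assms(2) by auto

lemma orb_sym:
  assumes bij: "bij_betw \<sigma> {0..<n} {0..<n}" and x: "x < n"
  shows "x \<in> orb \<sigma> ((\<sigma> ^^ m) x)"
proof -
  let ?A = "{0..<n}"
  have "\<not> inj_on (\<lambda>i. (\<sigma> ^^ i) x) {0..n}"
  proof
    assume inj: "inj_on (\<lambda>i. (\<sigma> ^^ i) x) {0..n}"
    have "(\<lambda>i. (\<sigma> ^^ i) x) ` {0..n} \<subseteq> ?A" using funpow_in[OF bij x] by auto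
    from card_mono[OF _ this] card_image[OF inj] show False by simp
  qed
  then obtain i j where ij: "i \<le> n" "j \<le> n" "i \<noteq> j" "(\<sigma> ^^ i) x = (\<sigma> ^^ j) x"
    unfolding inj_on_def by auto
  then obtain i j where ij: "i < j" "(\<sigma> ^^ i) x = (\<sigma> ^^ j) x"
    by (metis linorder_neqE_nat)
  define N where "N = j - i"
  have N: "N > 0" using ij by (simp add: N_def)
  have injf: "inj_on (\<sigma> ^^ i) ?A" using bij_betw_funpow[OF bij, of i] bij_betw_def by blast
  have "(\<sigma> ^^ i) ((\<sigma> ^^ N) x) = (\<sigma> ^^ i) x"
    using ij by (simp add: N_def flip: funpow_add[unfolded comp_def] ) (metis funpow_add comp_apply le_add_diff_inverse less_imp_le_nat)
  hence fix1: "(\<sigma> ^^ N) x = x"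
    using injf funpow_in[OF bij x] x unfolding inj_on_def by auto
  have fixq: "(\<sigma> ^^ (N * q)) x = x" for q
  proof (induction q)
    case (Suc q)
    have "(\<sigma> ^^ (N * Suc q)) x = (\<sigma> ^^ N) ((\<sigma> ^^ (N * q)) x)"
      by (simp add: funpow_add)
    then show ?case using Suc fix1 by simp
  qed simp
  have "m \<le> N * m" using N by simp
  hence "(\<sigma> ^^ (N * m - m)) ((\<sigma> ^^ m) x) = (\<sigma> ^^ (N * m)) x"
    by (metis comp_apply funpow_add le_add_diff_inverse2)
  hence "x = (\<sigma> ^^ (N*m-m)) ((\<sigma> ^^ m) x)" using fixq by simp
  thus ?thesis unfolding orb_def by blast
qed

lemma orb_eq:
  assumes bij: "bij_betw \<sigma> {0..<n} {0..<n}" and x: "x < n"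
  shows "orb \<sigma> ((\<sigma> ^^ m) x) = orb \<sigma> x"
proof
  show "orb \<sigma> ((\<sigma> ^^ m) x) \<subseteq> orb \<sigma> x"
    unfolding orb_def by (auto simp flip: funpow_add[unfolded comp_def]) (metis comp_apply funpow_add)
next
  from orb_sym[OF assms, of m] obtain i where i: "x = (\<sigma> ^^ i) ((\<sigma> ^^ m) x)"
    unfolding orb_def by auto
  show "orb \<sigma> x \<subseteq> orb \<sigma> ((\<sigma> ^^ m) x)"
  proof
    fix y assume "y \<in> orb \<sigma> x"
    then obtain l where "y = (\<sigma> ^^ l) x" unfolding orb_def by auto
    hence "y = (\<sigma> ^^ (l + i)) ((\<sigma> ^^ m) x)" using i by (metis comp_apply funpow_add)
    thus "y \<in> orb \<sigma> ((\<sigma> ^^ m) x)" unfolding orb_def by auto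
  qed
qed

lemma cyc_upper:
  assumes bij: "bij_betw \<sigma> {0..<n} {0..<n}" and R: "finite R" "R \<subseteq> {0..<n}"
    and cov: "\<And>x. x < n \<Longrightarrow> \<exists>r\<in>R. \<exists>m. x = (\<sigma> ^^ m) r"
  shows "cyc n \<sigma> \<le> card R"
proof -
  have "orb \<sigma> ` {0..<n} \<subseteq> orb \<sigma> ` R"
  proof
    fix Q assume "Q \<in> orb \<sigma> ` {0..<n}"
    then obtain x where x: "x < n" "Q = orb \<sigma> x" by auto
    then obtain r m where "r \<in> R" "x = (\<sigma> ^^ m) r" using cov by blast
    moreover have "r < n" using R \<open>r \<in> R\<close> by auto
    ultimately show "Q \<in> orb \<sigma> ` R" using orb_eq[OF bij, of r m] x by auto
  qed
  hence "card (orb \<sigma> ` {0..<n}) \<le> card (orb \<sigma> ` R)" using R by (intro card_mono) auto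
  also have "\<dots> \<le> card R" using R by (intro card_image_le) auto
  finally show ?thesis by (simp add: cyc_orb)
qed

lemma cyc_lower:
  assumes bij: "bij_betw \<sigma> {0..<n} {0..<n}"
    and inv: "\<And>x. x < n \<Longrightarrow> lab (\<sigma> x) = lab x"
  shows "card (lab ` {0..<n}) \<le> cyc n \<sigma>"
proof -
  have lm: "lab ((\<sigma> ^^ m) x) = lab x" if "x < n" for x m
  proof (induction m)
    case (Suc m)
    then show ?case using inv funpow_in[OF bij that, of m] by simp
  qed simp
  define g where "g Q = lab (SOME y. y \<in> Q)" for Q
  have "lab x = g (orb \<sigma> x)" if "x < n" for x
  proof -
    have "x \<in> orb \<sigma> x" unfolding orb_def by (auto intro: exI[of _ 0])
    hence "(SOME y. y \<in> orb \<sigma> x) \<in> orb \<sigma> x" by (rule someI)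
    then show ?thesis unfolding g_def orb_def using lm[OF that] by auto
  qed
  hence "lab ` {0..<n} = g ` (orb \<sigma> ` {0..<n})" by (auto simp: image_image)
  hence "card (lab ` {0..<n}) \<le> card (orb \<sigma> ` {0..<n})" by (simp add: card_image_le)
  thus ?thesis by (simp add: cyc_orb)
qed


lemma shift_bij:
  assumes "perm_Zn n \<pi>"
  shows "bij_betw (shift_perm n \<pi> c) {0..<n} {0..<n}"
proof -
  have "inj_on (\<lambda>x. (x + c) mod n) {0..<n}"
  proof (rule inj_onI)
    fix x y assume xy: "x \<in> {0..<n}" "y \<in> {0..<n}" "(x + c) mod n = (y + c) mod n"
    hence "[x + c = y + c] (mod n)" by (simp add: cong_def)
    hence "[x = y] (mod n)" by (simp add: cong_add_rcancel_nat)
    thus "x = y" using xy by (simp add: cong_def)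
  qed
  moreover have "(\<lambda>x. (x + c) mod n) ` {0..<n} \<subseteq> {0..<n}" by auto
  ultimately have "bij_betw (\<lambda>x. (x + c) mod n) {0..<n} {0..<n}"
    by (simp add: bij_betw_def endo_inj_surj)
  from bij_betw_trans[OF this assms[unfolded perm_Zn_def]] show ?thesis
    by (simp add: shift_perm_def comp_def)
qed

lemma poly_cong_int:
  fixes x y d :: int
  assumes "[x = y] (mod d)"
  shows "[poly f x = poly f y] (mod d)"
proof (induction f)
  case (pCons a f)
  then show ?case by (simp add: cong_add cong_mult assms)
qed simp

lemma shift_resp:
  assumes pp: "poly_perm_Zn n \<pi>" and d: "d dvd n" and xy: "[x = y] (mod d)" and n0: "n > 0"
  shows "[shift_perm n \<pi> c x = shift_perm n \<pi> c y] (mod d)"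
proof -
  have False: "n \<noteq> 0" using n0 by simp
  from pp obtain f :: "int poly" where f: "\<And>x. x < n \<Longrightarrow> int (\<pi> x) = poly f (int x) mod int n"
    unfolding poly_perm_Zn_def by auto
  have key: "[int (shift_perm n \<pi> c z) = poly f (int z + int c)] (mod int d)" for z
  proof -
    have "int (shift_perm n \<pi> c z) = poly f (int ((z + c) mod n)) mod int n"
      using f[of "(z + c) mod n"] False by (simp add: shift_perm_def)
    moreover have "[poly f (int ((z + c) mod n)) mod int n = poly f (int ((z + c) mod n))] (mod int d)"
      using d by (metis cong_mod_left cong_dvd_modulus cong_refl int_dvd_int_iff)
    moreover have "[poly f (int ((z + c) mod n)) = poly f (int z + int c)] (mod int d)"
    proof (rule poly_cong_int)
      have "[int ((z + c) mod n) = int (z + c)] (mod int n)" by (simp add: cong_def zmod_int)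
      hence "[int ((z + c) mod n) = int (z + c)] (mod int d)"
        using d by (metis cong_dvd_modulus int_dvd_int_iff)
      thus "[int ((z + c) mod n) = int z + int c] (mod int d)" by simp
    qed
    ultimately show ?thesis by (metis cong_trans)
  qed
  have "[int x + int c = int y + int c] (mod int d)"
    using xy by (simp add: cong_add cong_int_iff flip: of_nat_add)
  hence "[poly f (int x + int c) = poly f (int y + int c)] (mod int d)" by (rule poly_cong_int)
  hence "[int (shift_perm n \<pi> c x) = int (shift_perm n \<pi> c y)] (mod int d)"
    using key[of x] key[of y] by (meson cong_sym cong_trans)
  thus ?thesis by (simp add: cong_int_iff)
qed

lemma resid_inj:
  fixes \<sigma> :: "nat \<Rightarrow> nat"
  assumes bij: "bij_betw \<sigma> {0..<n} {0..<n}" and d: "d dvd n" "d > 0"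
    and resp: "\<And>x y. [x = y] (mod d) \<Longrightarrow> [\<sigma> x = \<sigma> y] (mod d)"
    and xy: "x < n" "y < n" "[\<sigma> x = \<sigma> y] (mod d)"
  shows "[x = y] (mod d)"
proof -
  have n: "n > 0" using xy(1) by linarith
  have dn: "d \<le> n" using d n by (simp add: dvd_imp_le)
  define h where "h r = \<sigma> r mod d" for r
  have "{0..<d} \<subseteq> h ` {0..<d}"
  proof
    fix s assume s: "s \<in> {0..<d}"
    hence "s \<in> {0..<n}" using dn by auto
    hence "s \<in> \<sigma> ` {0..<n}" using bij unfolding bij_betw_def by simp
    then obtain z where z: "z < n" "\<sigma> z = s" by auto
    have "[\<sigma> (z mod d) = \<sigma> z] (mod d)" by (intro resp) (simp add: cong_def)
    hence "h (z mod d) = s" using z s by (simp add: h_def cong_def)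
    thus "s \<in> h ` {0..<d}" using d by (metis atLeastLessThan_iff image_eqI mod_less_divisor zero_le)
  qed
  moreover have "h ` {0..<d} \<subseteq> {0..<d}" using d by (auto simp: h_def)
  ultimately have "h ` {0..<d} = {0..<d}" by blast
  hence inj: "inj_on h {0..<d}" by (simp add: eq_card_imp_inj_on)
  have "h (x mod d) = h (y mod d)"
  proof -
    have "[\<sigma> (x mod d) = \<sigma> x] (mod d)" "[\<sigma> (y mod d) = \<sigma> y] (mod d)"
      by (intro resp; simp add: cong_def)+
    thus ?thesis using xy by (simp add: h_def cong_def)
  qed
  hence "x mod d = y mod d" using inj d unfolding inj_on_def by auto
  thus ?thesis by (simp add: cong_def)
qed


lemma lower_bound:
  assumes pp: "poly_perm_Zn n \<pi>" and n: "n > 0"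
  shows "card {d. d dvd n} \<le> Max ((\<lambda>k. cyc n (shift_perm n \<pi> k)) ` {0..<n})"
proof -
  have bp: "bij_betw \<pi> {0..<n} {0..<n}" using pp by (simp add: poly_perm_Zn_def perm_Zn_def)
  have "0 \<in> \<pi> ` {0..<n}" using bp n unfolding bij_betw_def by simp
  then obtain c where c: "c < n" "\<pi> c = 0" by auto
  define \<sigma> where "\<sigma> = shift_perm n \<pi> c"
  have s0: "\<sigma> 0 = 0" using c by (simp add: \<sigma>_def shift_perm_def)
  have bij: "bij_betw \<sigma> {0..<n} {0..<n}" unfolding \<sigma>_def
    using pp by (intro shift_bij) (simp add: poly_perm_Zn_def)
  have dv: "d dvd \<sigma> x \<longleftrightarrow> d dvd x" if d: "d dvd n" and x: "x < n" for d x
  proof -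
    have d0: "d > 0" using d n by (metis dvd_0_left_iff gr0I less_nat_zero_code)
    have resp: "[\<sigma> u = \<sigma> v] (mod d)" if "[u = v] (mod d)" for u v
      unfolding \<sigma>_def using shift_resp[OF pp d that n] .
    have "d dvd \<sigma> x \<longleftrightarrow> [\<sigma> x = \<sigma> 0] (mod d)" using s0 by (simp add: cong_def dvd_eq_mod_eq_0)
    also have "\<dots> \<longleftrightarrow> [x = 0] (mod d)"
      using resid_inj[OF bij d d0 resp, of x 0] resp[of x 0] x n by blast
    also have "\<dots> \<longleftrightarrow> d dvd x" by (simp add: cong_def dvd_eq_mod_eq_0)
    finally show ?thesis .
  qed
  have inv: "gcd (\<sigma> x) n = gcd x n" if x: "x < n" for x
  proof (rule dvd_antisym)
    show "gcd (\<sigma> x) n dvd gcd x n"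
      using dv[of "gcd (\<sigma> x) n" x] x by simp
    show "gcd x n dvd gcd (\<sigma> x) n"
      using dv[of "gcd x n" x] x by simp
  qed
  have "card ((\<lambda>x. gcd x n) ` {0..<n}) \<le> cyc n \<sigma>"
    by (rule cyc_lower[OF bij]) (use inv in auto)
  moreover have "{d. d dvd n} \<subseteq> (\<lambda>x. gcd x n) ` {0..<n}"
  proof
    fix d assume "d \<in> {d. d dvd n}"
    hence d: "d dvd n" by simp
    show "d \<in> (\<lambda>x. gcd x n) ` {0..<n}"
    proof (cases "d = n")
      case True
      then show ?thesis using n by (intro image_eqI[of _ _ 0]) auto
    next
      case False
      hence "d < n" using d n by (meson dvd_imp_le le_neq_implies_less)
      then show ?thesis using d by (intro image_eqI[of _ _ d]) (auto simp: gcd_nat.absorb1)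
    qed
  qed
  hence "card {d. d dvd n} \<le> card ((\<lambda>x. gcd x n) ` {0..<n})" by (intro card_mono) auto
  moreover have "cyc n \<sigma> \<le> Max ((\<lambda>k. cyc n (shift_perm n \<pi> k)) ` {0..<n})"
    unfolding \<sigma>_def using c by (intro Max_ge) auto
  ultimately show ?thesis by linarith
qed


lemma div_count1:
  assumes "(p::nat) > 1"
  shows "k + 1 \<le> card {d. d dvd p ^ k}"
proof -
  have "(\<lambda>j. p ^ j) ` {0..k} \<subseteq> {d. d dvd p ^ k}" by (auto simp: le_imp_power_dvd)
  moreover have "inj_on (\<lambda>j. p ^ j) {0..k}" using assms by (auto simp: inj_on_def)
  moreover have "finite {d. d dvd p ^ k}" using assms by (intro finite_divisors_nat) simp
  ultimately have "card ((\<lambda>j. p ^ j) ` {0..k}) \<le> card {d. d dvd p ^ k}"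
    by (intro card_mono) auto
  thus ?thesis using \<open>inj_on _ _\<close> by (simp add: card_image)
qed

lemma div_count2:
  assumes "(p::nat) > 1" "odd p"
  shows "2 * (k + 1) \<le> card {d. d dvd 2 * p ^ k}"
proof -
  let ?A = "(\<lambda>j. p ^ j) ` {0..k}" and ?B = "(\<lambda>j. 2 * p ^ j) ` {0..k}"
  have "?A \<union> ?B \<subseteq> {d. d dvd 2 * p ^ k}" by (auto simp: le_imp_power_dvd)
  moreover have "inj_on (\<lambda>j. p ^ j) {0..k}" using assms by (auto simp: inj_on_def)
  moreover have "inj_on (\<lambda>j. 2 * p ^ j) {0..k}" using assms by (auto simp: inj_on_def)
  moreover have "?A \<inter> ?B = {}" using assms by auto (metis dvd_refl even_mult_iff even_power)
  ultimately have "card (?A \<union> ?B) = 2 * (k + 1)"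
    by (simp add: card_Un_disjoint card_image)
  moreover have "finite {d. d dvd 2 * p ^ k}" using assms by (intro finite_divisors_nat) simp
  ultimately show ?thesis using \<open>?A \<union> ?B \<subseteq> _\<close> by (metis card_mono)
qed

lemma pdecomp:
  assumes "(p::nat) > 1" "w > 0"
  shows "\<exists>j v. w = p ^ j * v \<and> \<not> p dvd v"
  using assms(2)
proof (induction w rule: less_induct)
  case (less w)
  show ?case
  proof (cases "p dvd w")
    case True
    then obtain w' where w': "w = p * w'" by auto
    hence "w' < w" "w' > 0" using less.prems assms by auto
    then obtain j v where "w' = p ^ j * v" "\<not> p dvd v" using less.IH by blast
    thus ?thesis using w' by (intro exI[of _ "Suc j"] exI[of _ v]) auto
  next
    case False
    then show ?thesis by (intro exI[of _ 0] exI[of _ w]) auto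
  qed
qed

lemma gen:
  fixes P g :: nat and v :: int
  assumes pr: "residue_primroot P g" and P1: "P > 1" and cop: "coprime v (int P)"
  shows "\<exists>m. [int g ^ m = v] (mod int P)"
proof -
  define v' where "v' = nat (v mod int P)"
  have v'eq: "int v' = v mod int P" using P1 by (simp add: v'_def)
  have "coprime (v mod int P) (int P)" using cop by (metis coprime_mod_left_iff mod_by_0)
  hence cop': "coprime v' P" using v'eq by (metis coprime_int_iff)
  have "v' \<noteq> 0"
  proof
    assume "v' = 0"
    hence "coprime 0 P" using cop' by simp
    thus False using P1 by simp
  qed
  moreover have "v' \<le> P" using v'eq P1
    by (metis less_imp_le_nat of_nat_less_iff pos_mod_bound of_nat_0_less_iff order.strict_trans zero_less_one)
  ultimately have "v' \<in> totatives P" using cop' by (auto simp: totatives_def)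
  hence "v' \<in> (\<lambda>i. g ^ i mod P) ` {..<totient P}"
    using residue_primroot_is_generator[OF P1 pr] unfolding bij_betw_def by simp
  then obtain i where "g ^ i mod P = v'" by blast
  hence "int g ^ i mod int P = v mod int P" using v'eq by (metis of_nat_mod of_nat_power)
  thus ?thesis by (auto simp: cong_def)
qed


lemma iter_affine:
  fixes \<sigma> :: "nat \<Rightarrow> nat" and A B x0 e :: int
  assumes bij: "bij_betw \<sigma> {0..<n} {0..<n}"
    and sf: "\<And>x. x < n \<Longrightarrow> int (\<sigma> x) = (A * int x + B) mod int n"
    and e: "e = (A - 1) * x0 + B" and dv: "int n dvd (A - 1) * e"
    and x: "x < n"
  shows "int ((\<sigma> ^^ m) x) = (x0 + A ^ m * (int x - x0) + int m * e) mod int n"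
proof (induction m)
  case 0
  then show ?case using x by simp
next
  case (Suc m)
  define Z where "Z = x0 + A ^ m * (int x - x0) + int m * e"
  have y: "(\<sigma> ^^ m) x < n" using funpow_in[OF bij x] .
  have "int ((\<sigma> ^^ Suc m) x) = (A * int ((\<sigma> ^^ m) x) + B) mod int n"
    using sf[OF y] by simp
  also have "\<dots> = (A * (Z mod int n) + B) mod int n" using Suc by (simp add: Z_def)
  also have "\<dots> = (A * Z + B) mod int n" by (metis mod_add_left_eq mod_mult_right_eq)
  also have "\<dots> = (x0 + A ^ Suc m * (int x - x0) + int (Suc m) * e) mod int n"
  proof -
    have "(A * Z + B) - (x0 + A ^ Suc m * (int x - x0) + int (Suc m) * e) = int m * ((A - 1) * e)"
      by (simp add: Z_def e algebra_simps)
    hence "int n dvd (A * Z + B) - (x0 + A ^ Suc m * (int x - x0) + int (Suc m) * e)"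
      using dv by simp
    thus ?thesis by (simp add: mod_eq_dvd_iff)
  qed
  finally show ?case .
qed


lemma a_props:
  fixes p k n P g :: nat
  assumes p: "prime p" "odd p" and k: "k \<ge> 1" and P: "P = p ^ k" and n: "n = P \<or> n = 2 * P"
    and g: "residue_primroot P g"
  defines "a \<equiv> if odd g then g else g + P"
  shows "[int a = int g] (mod int P)" "odd a" "coprime a n"
proof -
  show ga: "[int a = int g] (mod int P)" by (simp add: a_def cong_def)
  have oddP: "odd P" using p P by simp
  show odda: "odd a" using oddP by (simp add: a_def)
  have "coprime P g" using g by (simp add: residue_primroot_def)
  hence "coprime (int g) (int P)" by (simp add: coprime_commute)
  hence "coprime (int a) (int P)" using ga by (metis cong_imp_coprime cong_sym)
  hence c1: "coprime a P" by simp
  have "coprime a 2" using odda by (simp add: coprime_commute)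
  hence "coprime a (2 * P)" using c1 by simp
  thus "coprime a n" using n c1 by auto
qed

lemma upper_pp:
  fixes p k n P g :: nat
  assumes p: "prime p" "odd p" and k: "k \<ge> 1" and P: "P = p ^ k" and n: "n = P \<or> n = 2 * P"
    and g: "residue_primroot P g"
  defines "a \<equiv> if odd g then g else g + P"
  shows "poly_perm_Zn n (\<lambda>x. a * x mod n)"
proof -
  have cop: "coprime a n" using a_props[OF p k P n g] unfolding a_def by blast
  have n0: "n > 0" using n P p by (auto simp: prime_gt_0_nat)
  have inj: "inj_on (\<lambda>x. a * x mod n) {0..<n}"
  proof (rule inj_onI)
    fix x y assume xy: "x \<in> {0..<n}" "y \<in> {0..<n}" "a * x mod n = a * y mod n"
    hence "[a * x = a * y] (mod n)" by (simp add: cong_def)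
    hence "[x = y] (mod n)" using cop by (metis cong_mult_lcancel_nat coprime_commute)
    thus "x = y" using xy by (simp add: cong_def)
  qed
  moreover have "(\<lambda>x. a * x mod n) ` {0..<n} \<subseteq> {0..<n}" using n0 by auto
  ultimately have "bij_betw (\<lambda>x. a * x mod n) {0..<n} {0..<n}"
    by (simp add: bij_betw_def endo_inj_surj)
  moreover have "\<forall>x<n. int (a * x mod n) = poly [:0, int a:] (int x) mod int n"
    by (simp add: of_nat_mod mult.commute)
  ultimately show ?thesis unfolding poly_perm_Zn_def perm_Zn_def by blast
qed


lemma upper_cyc:
  fixes p k n P g c :: nat
  assumes p: "prime p" "odd p" and k: "k \<ge> 1" and P: "P = p ^ k" and n: "n = P \<or> n = 2 * P"
    and g: "residue_primroot P g"
  defines "a \<equiv> if odd g then g else g + P"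
  shows "cyc n (shift_perm n (\<lambda>x. a * x mod n) c) \<le> (k + 1) * (if n = P then 1 else 2)"
proof -
  have p1: "p > 1" using prime_gt_1_nat[OF p(1)] .
  have P1: "P > 1" using P one_less_power[OF p1, of k] k by simp
  have n0: "n > 0" using n P1 by auto
  have oddP: "odd P" using p P by simp
  note ap = a_props[OF p k P n g, folded a_def]
  define \<pi> where "\<pi> = (\<lambda>x. a * x mod n)"
  define \<sigma> where "\<sigma> = shift_perm n \<pi> c"
  have pp: "poly_perm_Zn n \<pi>" unfolding \<pi>_def a_def by (rule upper_pp[OF p k P n g])
  have bij: "bij_betw \<sigma> {0..<n} {0..<n}" unfolding \<sigma>_def
    using pp by (intro shift_bij) (simp add: poly_perm_Zn_def)
  define A where "A = int a"
  define B where "B = A * int c"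
  have sf: "int (\<sigma> x) = (A * int x + B) mod int n" if "x < n" for x
  proof -
    have "int (\<sigma> x) = (A * (int (x + c) mod int n)) mod int n"
      by (simp add: \<sigma>_def \<pi>_def shift_perm_def A_def of_nat_mod)
    also have "\<dots> = (A * int (x + c)) mod int n" by (simp add: mod_mult_right_eq)
    finally show ?thesis by (simp add: B_def algebra_simps)
  qed
  have gA: "[A = int g] (mod int P)" using ap(1) by (simp add: A_def)
  have oddA: "odd A" using ap(2) by (simp add: A_def)
  have cop2: "coprime (2::int) (int p)"
    using p by (intro prime_imp_coprime) (auto simp: prime_nat_int_transfer)
  obtain m2 where m2: "[int g ^ m2 = 2] (mod int P)"
    using gen[OF g P1, of 2] cop2 P by (auto simp: coprime_commute)
  have pP: "int p dvd int P" using P k by (simp add: dvd_power)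
  have "\<not> int p dvd (A - 1)"
  proof
    assume "int p dvd (A - 1)"
    hence "[A = 1] (mod int p)" by (simp add: cong_iff_dvd_diff)
    moreover have "[int g = A] (mod int p)" using gA pP by (meson cong_dvd_modulus cong_sym)
    ultimately have "[int g = 1] (mod int p)" by (meson cong_trans)
    hence "[int g ^ m2 = 1 ^ m2] (mod int p)" by (rule cong_pow)
    moreover have "[int g ^ m2 = 2] (mod int p)" using m2 pP by (meson cong_dvd_modulus)
    ultimately have "[1 = (2::int)] (mod int p)" by (metis cong_sym cong_trans power_one)
    hence "int p dvd 1" by (simp add: cong_iff_dvd_diff)
    thus False using p1 by simp
  qed
  hence "coprime (int p) (A - 1)"
    using p by (intro prime_imp_coprime) (auto simp: prime_nat_int_transfer)
  hence "coprime (A - 1) (int P)" using P by (simp add: coprime_commute)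
  then obtain s where s: "[(A - 1) * s = 1] (mod int P)" using cong_solve_coprime_int by blast
  define x0 where "x0 = - B * s"
  define e where "e = (A - 1) * x0 + B"
  have Pe: "int P dvd e"
  proof -
    have "int P dvd 1 - (A - 1) * s" using s by (metis cong_iff_dvd_diff cong_sym)
    hence "int P dvd B * (1 - (A - 1) * s)" by simp
    moreover have "B * (1 - (A - 1) * s) = e" by (simp add: e_def x0_def algebra_simps)
    ultimately show ?thesis by simp
  qed
  have ndv: "int n dvd (A - 1) * e"
    using n
  proof
    assume "n = P" thus ?thesis using Pe by simp
  next
    assume n2: "n = 2 * P"
    have "2 dvd A - 1" using oddA by simp
    hence "2 * int P dvd (A - 1) * e" using Pe by (rule mult_dvd_mono)
    thus ?thesis using n2 by simp
  qed
  note iter = iter_affine[OF bij sf e_def ndv]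
  define T where "T = (if n = P then {0} else {0, 1::nat})"
  define R where "R = (\<lambda>(j, t). nat ((x0 + int p ^ j + int t * int P) mod int n)) ` ({0..k} \<times> T)"
  have finR: "finite R" by (simp add: R_def T_def)
  have RA: "R \<subseteq> {0..<n}" using n0 by (auto simp: R_def nat_less_iff)
  have cardR: "card R \<le> (k + 1) * (if n = P then 1 else 2)"
  proof -
    have "card R \<le> card ({0..k} \<times> T)" unfolding R_def by (rule card_image_le) (simp add: T_def)
    also have "\<dots> = (k + 1) * (if n = P then 1 else 2)" by (simp add: T_def card_cartesian_product)
    finally show ?thesis .
  qed
  have cov: "\<exists>r\<in>R. \<exists>m. x = (\<sigma> ^^ m) r" if x: "x < n" for x
  proof -
    obtain j v where j: "j \<le> k" and v: "coprime v (int p)"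
      and jv: "int P dvd int p ^ j * v - (int x - x0)"
    proof (cases "(int x - x0) mod int P = 0")
      case True
      hence "int P dvd int x - x0" by (simp add: dvd_eq_mod_eq_0)
      hence "int P dvd int p ^ k * 1 - (int x - x0)" using P by (metis dvd_diff dvd_refl mult_1_right of_nat_power)
      thus ?thesis using that[of k 1] by simp
    next
      case False
      define w where "w = (int x - x0) mod int P"
      have w0: "w > 0" using False P1 by (simp add: w_def order_le_neq_trans)
      have wP: "w < int P" using P1 by (simp add: w_def)
      obtain j v' where jv': "nat w = p ^ j * v'" "\<not> p dvd v'" using pdecomp[OF p1, of "nat w"] w0 by auto
      have "p ^ j \<le> nat w" using jv' w0 by (metis dvd_imp_le dvd_triv_left zero_less_nat_eq)
      moreover have "nat w < P" using wP w0 by linarith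
      ultimately have "p ^ j < p ^ k" using P by linarith
      hence jk: "j \<le> k" using p1 by (meson less_imp_le power_less_imp_less_exp)
      have cv: "coprime (int v') (int p)" using jv'(2) p by (simp add: prime_imp_coprime coprime_commute)
      have "int p ^ j * int v' = w" using jv' w0 by (metis of_nat_mult of_nat_power zero_less_nat_eq int_nat_eq less_le)
      moreover have "int P dvd w - (int x - x0)" unfolding w_def by (metis mod_mod_trivial mod_eq_dvd_iff)
      ultimately show ?thesis using that[OF jk cv] by simp
    qed
    have vP: "coprime v (int P)" using v P by simp
    obtain m where m: "[int g ^ m = v] (mod int P)" using gen[OF g P1 vP] by auto
    have Am: "int P dvd A ^ m - v"
    proof -
      have "[A ^ m = int g ^ m] (mod int P)" using gA by (rule cong_pow)
      hence "[A ^ m = v] (mod int P)" using m by (rule cong_trans)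
      thus ?thesis by (simp add: cong_iff_dvd_diff)
    qed
    define t :: nat where "t = (if n = P then 0 else if even (x0 + 1 + int m * e - int x) then 0 else 1)"
    define Y where "Y = x0 + int p ^ j + int t * int P"
    define r where "r = nat (Y mod int n)"
    have tT: "t \<in> T" by (simp add: T_def t_def)
    have rR: "r \<in> R" unfolding R_def r_def Y_def
      by (rule image_eqI[of _ _ "(j, t)"]) (use j tT in auto)
    have rn: "r < n" using rR RA by auto
    have rint: "int r = Y mod int n" using n0 by (simp add: r_def)
    define X where "X = x0 + A ^ m * (int p ^ j + int t * int P) + int m * e"
    have "int ((\<sigma> ^^ m) r) = (x0 + A ^ m * (int r - x0) + int m * e) mod int n"
      using iter[of r m] rn by blast
    also have "\<dots> = X mod int n"
    proof -
      have "[int r = Y] (mod int n)" using rint by (simp add: cong_def)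
      hence "[int r - x0 = int p ^ j + int t * int P] (mod int n)"
        unfolding Y_def by (metis add_diff_cancel_left' cong_diff cong_refl diff_add_eq)
      hence "[x0 + A ^ m * (int r - x0) + int m * e = X] (mod int n)"
        unfolding X_def by (intro cong_add cong_mult cong_refl)
      thus ?thesis by (simp add: cong_def)
    qed
    also have "X mod int n = int x"
    proof -
      have XP: "int P dvd X - int x"
      proof -
        have "X - int x = (A ^ m - v) * int p ^ j + (int p ^ j * v - (int x - x0))
              + A ^ m * int t * int P + int m * e"
          by (simp add: X_def algebra_simps)
        moreover have "int P dvd (A ^ m - v) * int p ^ j" using Am by simp
        moreover have "int P dvd int m * e" using Pe by simp
        moreover have "int P dvd A ^ m * int t * int P" by simp
        ultimately show ?thesis using jv by (metis dvd_add)
      qed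
      have "int n dvd X - int x"
        using n
      proof
        assume "n = P" thus ?thesis using XP by simp
      next
        assume n2: "n = 2 * P"
        have "even (x0 + 1 + int t + int m * e - int x)"
          using n2 P1 by (auto simp: t_def)
        moreover have "odd (A ^ m)" using oddA by simp
        moreover have "odd (int p ^ j)" using p by simp
        moreover have "odd (int P)" using oddP by simp
        ultimately have "even (X - int x)"
          unfolding X_def by (auto simp: algebra_simps)
        hence "2 * int P dvd X - int x" using XP oddP
          by (intro divides_mult) (auto simp: coprime_commute)
        thus ?thesis using n2 by simp
      qed
      hence "X mod int n = int x mod int n" by (simp add: mod_eq_dvd_iff)
      thus ?thesis using x by simp
    qed
    finally have "(\<sigma> ^^ m) r = x" by simp
    thus ?thesis using rR by blast
  qed
  have "cyc n \<sigma> \<le> card R" by (rule cyc_upper[OF bij finR RA cov])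
  thus ?thesis using cardR by (simp add: \<sigma>_def \<pi>_def)
qed


lemma c_poly_eq:
  assumes n: "n > 0" and lb: "b \<le> card {d. d dvd n}" and pp: "poly_perm_Zn n \<pi>0"
    and ub: "\<And>c. c < n \<Longrightarrow> cyc n (shift_perm n \<pi>0 c) \<le> b"
  shows "c_poly n = b"
proof -
  let ?S = "\<lambda>\<pi>. Max ((\<lambda>k. cyc n (shift_perm n \<pi> k)) ` {0..<n})"
  have ex: "\<exists>\<pi>. poly_perm_Zn n \<pi> \<and> ?S \<pi>0 = ?S \<pi>" using pp by blast
  have "c_poly n \<le> ?S \<pi>0" unfolding c_poly_def by (rule Least_le) (rule ex)
  also have "?S \<pi>0 \<le> b" using n ub by (subst Max_le_iff) auto
  finally have le: "c_poly n \<le> b" .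
  have "\<exists>\<pi>. poly_perm_Zn n \<pi> \<and> c_poly n = ?S \<pi>"
    unfolding c_poly_def by (rule LeastI_ex) (rule exI, rule ex)
  then obtain \<pi> where "poly_perm_Zn n \<pi>" "c_poly n = ?S \<pi>" by blast
  hence "card {d. d dvd n} \<le> c_poly n" using lower_bound n by simp
  thus ?thesis using le lb by linarith
qed

theorem corollary5p4:
  fixes p k :: nat
  assumes "prime p" and "p \<ge> 3" and "k \<ge> 1"
  shows "c_poly (p ^ k) = k + 1 \<and> c_poly (2 * p ^ k) = 2 * (k + 1)"
proof -
  have p: "prime p" "odd p" using assms by (auto simp: prime_odd_nat)
  have p1: "p > 1" using assms by simp
  obtain g where g: "\<forall>k>0. residue_primroot (p ^ k) g"
    using residue_primroot_odd_prime_power_exists[OF p] by blast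
  have gk: "residue_primroot (p ^ k) g" using g assms by simp
  define a where "a = (if odd g then g else g + p ^ k)"
  have P1: "p ^ k > 1" using one_less_power[OF p1, of k] assms by simp
  have "c_poly (p ^ k) = k + 1"
  proof (rule c_poly_eq)
    show "0 < p ^ k" using P1 by linarith
    show "k + 1 \<le> card {d. d dvd p ^ k}" by (rule div_count1[OF p1])
    show "poly_perm_Zn (p ^ k) (\<lambda>x. a * x mod p ^ k)"
      unfolding a_def by (rule upper_pp[OF p assms(3) refl _ gk]) simp
    show "cyc (p ^ k) (shift_perm (p ^ k) (\<lambda>x. a * x mod p ^ k) c) \<le> k + 1" for c
      using upper_cyc[OF p assms(3) refl _ gk, of "p ^ k" c] unfolding a_def by simp
  qed
  moreover have "c_poly (2 * p ^ k) = 2 * (k + 1)"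
  proof (rule c_poly_eq)
    show "0 < 2 * p ^ k" using p1 by simp
    show "2 * (k + 1) \<le> card {d. d dvd 2 * p ^ k}" by (rule div_count2[OF p1 p(2)])
    show "poly_perm_Zn (2 * p ^ k) (\<lambda>x. a * x mod (2 * p ^ k))"
      unfolding a_def by (rule upper_pp[OF p assms(3) refl _ gk]) simp
    show "cyc (2 * p ^ k) (shift_perm (2 * p ^ k) (\<lambda>x. a * x mod (2 * p ^ k)) c) \<le> 2 * (k + 1)" for c
    proof -
      have ne: "2 * p ^ k \<noteq> p ^ k" using p1 by simp
      have "cyc (2 * p ^ k) (shift_perm (2 * p ^ k) (\<lambda>x. a * x mod (2 * p ^ k)) c)
          \<le> (k + 1) * (if 2 * p ^ k = p ^ k then 1 else 2)"
        unfolding a_def by (rule upper_cyc[OF p assms(3) refl _ gk]) simp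
      thus ?thesis using ne by simp
    qed
  qed
  ultimately show ?thesis by simp
qed

end
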